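(* Let $k\in\mathbb{N}$ and let $u=a_1\cdots a_n$ be a word over a finite alphabet $A$ with $x$-coordinates $x_1,\dots,x_n$ (where $x_i$ is the minimal length of an X-ranker reaching position $i$ in $u$). Run the following algorithm: initialize $n_a\gets1$ for all $a\in A$; for $i=n,n-1,\dots,1$: let $c=a_i$; if $x_i+n_c\le k+1$, then set $y_i\gets n_c$, $n_c\gets n_c+1$, and for all $a\in A$ set $n_a\gets\min(n_a,n_c)$; otherwise mark position $i$ for deletion. Let $v$ be the word obtained from $u$ by removing all marked positions. Then $u\sim_k v$.
   Context: $u\sim_k v$ iff $u$ and $v$ have the same scattered subwords of length at most $k$ (a word $b_1\cdots b_m$ is a subword of $w$ if $w=w_0b_1w_1\cdots b_mw_m$). An X-ranker is a nonempty word over $\{\mathsf X_a : a\in A\}$, length = word length; for a word $w$, $\mathsf X_a(w)$ is the smallest $a$-position of $w$ and $r\mathsf X_a(w)$ the smallest $a$-position greater than $r(w)$ (possibly undefined). *)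

theory Defs
  imports Main "HOL-Library.Sublist"
begin

text \<open>Positions of a word w are 1-based: 1..length w, letter at
  position i is w!(i-1). Position 0 is a virtual start position, so that
  X_a(w) = smallest a-position > 0 and rX_a(w) = smallest a-position > r(w).\<close>

definition next_pos :: "'a list \<Rightarrow> nat \<Rightarrow> 'a \<Rightarrow> nat option" where
  "next_pos w p a =
     (if \<exists>i. p < i \<and> i \<le> length w \<and> w ! (i - 1) = a
      then Some (LEAST i. p < i \<and> i \<le> length w \<and> w ! (i - 1) = a) else None)"

text \<open>An X-ranker X_{b1} X_{b2} ... X_{bm} is represented by the list [b1,...,bm]
  (read left to right: b1 is applied first).\<close>

fun reach :: "'a list \<Rightarrow> nat \<Rightarrow> 'a list \<Rightarrow> nat option" where
  "reach w p [] = Some p"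
| "reach w p (a # r) = (case next_pos w p a of None \<Rightarrow> None | Some q \<Rightarrow> reach w q r)"

definition ranker_pos :: "'a list \<Rightarrow> 'a list \<Rightarrow> nat option" where
  "ranker_pos r w = (if r = [] then None else reach w 0 r)"

definition xcoord :: "'a list \<Rightarrow> nat \<Rightarrow> nat" where
  "xcoord u i = (LEAST m. \<exists>r. length r = m \<and> ranker_pos r u = Some i)"

definition simk :: "nat \<Rightarrow> 'a list \<Rightarrow> 'a list \<Rightarrow> bool" where
  "simk k u v \<longleftrightarrow> (\<forall>w. length w \<le> k \<longrightarrow> (subseq w u \<longleftrightarrow> subseq w v))"

fun del_aux :: "'a list \<Rightarrow> nat \<Rightarrow> nat \<Rightarrow> ('a \<Rightarrow> nat) \<Rightarrow> 'a list" where
  "del_aux u k 0 N = []"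
| "del_aux u k (Suc i) N =
     (let c = u ! i in
      if xcoord u (Suc i) + N c \<le> k + 1
      then (let N1 = N(c := N c + 1); N2 = (\<lambda>a. min (N1 a) (N1 c))
            in del_aux u k i N2 @ [c])
      else del_aux u k i N)"

definition del_word :: "nat \<Rightarrow> 'a list \<Rightarrow> 'a list" where
  "del_word k u = del_aux u k (length u) (\<lambda>_. 1)"

end

theory Submission
  imports Defs
begin

lemma np_step:
  assumes "p < length u"
  shows "next_pos u p a = (if u ! p = a then Some (Suc p) else next_pos u (Suc p) a)"
proof (cases "u ! p = a")
  case True
  have "(LEAST i. p < i \<and> i \<le> length u \<and> u ! (i - 1) = a) = Suc p"
    by (rule Least_equality) (use True assms in auto)
  moreover have "\<exists>i. p < i \<and> i \<le> length u \<and> u ! (i - 1) = a"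
    using True assms by (intro exI[of _ "Suc p"]) auto
  ultimately show ?thesis using True unfolding next_pos_def by simp
next
  case False
  have eq: "(p < i \<and> i \<le> length u \<and> u ! (i - 1) = a) \<longleftrightarrow>
            (Suc p < i \<and> i \<le> length u \<and> u ! (i - 1) = a)" for i
    using False by (cases "i = Suc p") auto
  show ?thesis using False unfolding next_pos_def eq by simp
qed

lemma np_some: "next_pos u p a = Some q \<Longrightarrow> p < q"
proof -
  assume h: "next_pos u p a = Some q"
  then have ex: "\<exists>i. p < i \<and> i \<le> length u \<and> u ! (i - 1) = a"
    unfolding next_pos_def by (auto split: if_splits)
  then have "q = (LEAST i. p < i \<and> i \<le> length u \<and> u ! (i - 1) = a)"
    using h unfolding next_pos_def by auto
  then show "p < q" using LeastI_ex[OF ex] by simp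
qed

lemma reach_mono: "reach u p r = Some q \<Longrightarrow> p \<le> q"
proof (induction r arbitrary: p)
  case Nil then show ?case by simp
next
  case (Cons a r)
  then obtain q0 where "next_pos u p a = Some q0" "reach u q0 r = Some q"
    by (auto split: option.splits)
  then show ?case using Cons.IH np_some by fastforce
qed

lemma seg_Cons:
  assumes "p < j" "j \<le> length u"
  shows "drop p (take j u) = u ! p # drop (Suc p) (take j u)"
  using assms by (simp add: Cons_nth_drop_Suc[symmetric])

lemma reach_seg:
  "p \<le> j \<Longrightarrow> j \<le> length u \<Longrightarrow>
   (subseq r (drop p (take j u)) \<longleftrightarrow> (\<exists>q. reach u p r = Some q \<and> q \<le> j))"
proof (induction r arbitrary: p)
  case Nil then show ?case by simp
next
  case (Cons a r)
  have "\<And>d p. j - p = d \<Longrightarrow> p \<le> j \<Longrightarrow>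
     (subseq (a # r) (drop p (take j u)) \<longleftrightarrow> (\<exists>q. reach u p (a # r) = Some q \<and> q \<le> j))"
  proof -
    fix d p
    show "j - p = d \<Longrightarrow> p \<le> j \<Longrightarrow>
     (subseq (a # r) (drop p (take j u)) \<longleftrightarrow> (\<exists>q. reach u p (a # r) = Some q \<and> q \<le> j))"
    proof (induction d arbitrary: p)
      case 0
      then have pj: "p = j" by simp
      have "\<not> (\<exists>q. reach u p (a # r) = Some q \<and> q \<le> j)"
      proof
        assume "\<exists>q. reach u p (a # r) = Some q \<and> q \<le> j"
        then obtain q q0 where "next_pos u p a = Some q0" "reach u q0 r = Some q" "q \<le> j"
          by (auto split: option.splits)
        then show False using np_some reach_mono pj by fastforce
      qed
      then show ?case using pj by simp
    next
      case (Suc d)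
      then have pj: "p < j" by simp
      have pl: "p < length u" using pj Cons.prems by simp
      show ?case
      proof (cases "u ! p = a")
        case True
        then show ?thesis using seg_Cons[OF pj Cons.prems(2)] np_step[OF pl, of a]
            Cons.IH[of "Suc p"] pj Cons.prems by simp
      next
        case False
        then show ?thesis using seg_Cons[OF pj Cons.prems(2)] np_step[OF pl, of a]
            Suc.IH[of "Suc p"] Suc.prems by simp
      qed
    qed
  qed
  then show ?case using Cons.prems by blast
qed

lemma xbound:
  assumes "i < length u" "subseq t1 (take i u)" "\<not> subseq (t1 @ [u ! i]) (take i u)"
  shows "xcoord u (Suc i) \<le> length t1 + 1"
proof -
  have "subseq (t1 @ [u ! i]) (take (Suc i) u)"
    using assms by (simp add: take_Suc_conv_app_nth list_emb_append_mono)
  then obtain q where q: "reach u 0 (t1 @ [u ! i]) = Some q" "q \<le> Suc i"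
    using reach_seg[of 0 "Suc i" u "t1 @ [u ! i]"] assms(1) by auto
  have "\<not> q \<le> i"
  proof
    assume "q \<le> i"
    then have "subseq (t1 @ [u ! i]) (take i u)"
      using reach_seg[of 0 i u "t1 @ [u ! i]"] assms(1) q by auto
    then show False using assms(3) by simp
  qed
  then have "q = Suc i" using q by simp
  then have "ranker_pos (t1 @ [u ! i]) u = Some (Suc i)"
    using q unfolding ranker_pos_def by simp
  then show ?thesis unfolding xcoord_def
    by (intro Least_le) (rule exI[of _ "t1 @ [u ! i]"], simp)
qed

definition inv :: "'a list \<Rightarrow> ('a \<Rightarrow> nat) \<Rightarrow> bool" where
  "inv s N \<longleftrightarrow> (\<forall>a t. subseq t s \<and> \<not> subseq (a # t) s \<longrightarrow> N a \<le> length t + 1)"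

lemma inv_step:
  assumes "inv s N"
  shows "inv (c # s) (\<lambda>a. min ((N(c := N c + 1)) a) ((N(c := N c + 1)) c))"
  unfolding inv_def
proof (intro allI impI)
  fix a t
  assume h: "subseq t (c # s) \<and> \<not> subseq (a # t) (c # s)"
  show "min ((N(c := N c + 1)) a) ((N(c := N c + 1)) c) \<le> length t + 1"
  proof (cases "a = c")
    case True
    then have nt: "\<not> subseq t s" using h by simp
    then obtain b t' where t: "t = b # t'" by (cases t) auto
    have "b = c" using h nt t by (auto split: if_splits)
    then have "subseq t' s" "\<not> subseq (c # t') s" using h nt t by auto
    then have "N c \<le> length t' + 1" using assms unfolding inv_def by blast
    then show ?thesis using True t by simp
  next
    case False
    then have na: "\<not> subseq (a # t) s" using h by simp
    show ?thesis
    proof (cases "subseq t s")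
      case True
      then have "N a \<le> length t + 1" using na assms unfolding inv_def by blast
      then show ?thesis using False by simp
    next
      case nt: False
      then obtain b t' where t: "t = b # t'" by (cases t) auto
      have "b = c" using h nt t by (auto split: if_splits)
      then have "subseq t' s" "\<not> subseq (c # t') s" using h nt t by auto
      then have "N c \<le> length t' + 1" using assms unfolding inv_def by blast
      then show ?thesis using t by simp
    qed
  qed
qed

lemma del_one:
  assumes px: "\<And>t1. subseq t1 p \<Longrightarrow> \<not> subseq (t1 @ [c]) p \<Longrightarrow> x \<le> length t1 + 1"
    and py: "\<And>t2. subseq t2 s \<Longrightarrow> \<not> subseq (c # t2) s \<Longrightarrow> y \<le> length t2 + 1"
    and big: "k + 1 < x + y"
  shows "simk k (p @ c # s) (p @ s)"
  unfolding simk_def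
proof (intro allI impI iffI)
  fix t :: "'a list"
  assume "subseq t (p @ s)"
  then show "subseq t (p @ c # s)"
    by (metis list_emb_append_mono subseq_order.order_refl list_emb_Cons subseq_append_iff)
next
  fix t :: "'a list"
  assume len: "length t \<le> k" and st: "subseq t (p @ c # s)"
  then obtain t1 t' where t: "t = t1 @ t'" "subseq t1 p" "subseq t' (c # s)"
    by (auto elim: subseq_appendE)
  show "subseq t (p @ s)"
  proof (cases "subseq t' s")
    case True then show ?thesis using t list_emb_append_mono by blast
  next
    case False
    then obtain b t2 where t': "t' = b # t2" by (cases t') auto
    have bc: "b = c" using False t t' by (auto split: if_splits)
    then have s2: "subseq t2 s" "\<not> subseq (c # t2) s" using False t t' by auto
    then have yb: "y \<le> length t2 + 1" using py by blast
    show ?thesis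
    proof (cases "subseq (t1 @ [c]) p")
      case True
      then have "subseq ((t1 @ [c]) @ t2) (p @ s)" using s2 list_emb_append_mono by blast
      then show ?thesis using t t' bc by simp
    next
      case False
      then have "x \<le> length t1 + 1" using px t by blast
      then show ?thesis using yb big len t t' by simp
    qed
  qed
qed

lemma simk_trans: "simk k u v \<Longrightarrow> simk k v w \<Longrightarrow> simk k u w"
  unfolding simk_def by blast

lemma main:
  "i \<le> length u \<Longrightarrow> inv s N \<Longrightarrow> simk k (take i u @ s) (del_aux u k i N @ s)"
proof (induction i arbitrary: s N)
  case 0 then show ?case by (simp add: simk_def)
next
  case (Suc i)
  define c where "c = u ! i"
  have il: "i < length u" using Suc.prems by simp
  have tk: "take (Suc i) u @ s = take i u @ c # s"
    using il by (simp add: take_Suc_conv_app_nth c_def)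
  show ?case
  proof (cases "xcoord u (Suc i) + N c \<le> k + 1")
    case True
    have "del_aux u k (Suc i) N =
          del_aux u k i (\<lambda>a. min ((N(c := N c + 1)) a) ((N(c := N c + 1)) c)) @ [c]"
      using True by (simp add: c_def Let_def)
    then show ?thesis using tk Suc.IH[of "c # s"] inv_step[OF Suc.prems(2)] il by simp
  next
    case False
    have d: "del_aux u k (Suc i) N = del_aux u k i N"
      using False by (simp add: c_def Let_def)
    have "simk k (take i u @ c # s) (take i u @ s)"
    proof (rule del_one[where x = "xcoord u (Suc i)" and y = "N c"])
      fix t1 assume "subseq t1 (take i u)" "\<not> subseq (t1 @ [c]) (take i u)"
      then show "xcoord u (Suc i) \<le> length t1 + 1" using xbound il c_def by blast
    next
      fix t2 assume "subseq t2 s" "\<not> subseq (c # t2) s"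
      then show "N c \<le> length t2 + 1" using Suc.prems(2) unfolding inv_def by blast
    next
      show "k + 1 < xcoord u (Suc i) + N c" using False by simp
    qed
    then show ?thesis using tk d Suc.IH[OF _ Suc.prems(2)] il simk_trans by fastforce
  qed
qed

theorem lemma16:
  fixes k :: nat and u :: "'a list" and A :: "'a set"
  assumes "finite A" and "set u \<subseteq> A"
  shows "simk k u (del_word k u)"
proof -
  have "inv [] (\<lambda>_. 1)" unfolding inv_def by simp
  then show ?thesis using main[of "length u" u "[]" "\<lambda>_. 1" k] unfolding del_word_def by simp
qed

end
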